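(* Let $k,\ell\ge0$, $\pi_1\in\mathcal{T}_k$, $\pi_2\in\mathcal{T}_\ell$, where $\mathcal{T}_0=\{\epsilon\}$. Let $\pi=C_1(\pi_1,\pi_2)=\pi_1\cdot(k+\ell+1)\cdot\pi_2^{+k}$. Then $\pi\in\mathcal{T}_{k+\ell+1}$, and $\operatorname{slmax}(\pi)=\operatorname{slmax}(\pi_1)+\operatorname{slmax}(\pi_2)+1$.
   Context: For a finite sequence $A$ of distinct integers, the stack-sorting operator $\mathcal{S}$ is defined by $\mathcal{S}(\epsilon)=\epsilon$ for the empty sequence and, if $A$ is non-empty with largest element $m$, writing $A=A_L\cdot(m)\cdot A_R$ (concatenation), $\mathcal{S}(A)=\mathcal{S}(A_L)\cdot\mathcal{S}(A_R)\cdot(m)$. For $n\ge1$, $\mathcal{T}_n$ is the set of permutations $\sigma\in\mathfrak{S}_n$ (viewed as sequences) with $\mathcal{S}(\mathcal{S}(\sigma))$ equal to the identity (two-stack sortable permutations). For a sequence $\tau$, $\tau^{+k}$ is obtained by adding $k$ to each element. For a permutation $\sigma$, $\operatorname{slmax}(\sigma)$ is the number of left-to-right maxima of $\mathcal{S}(\sigma)$ (indices $i$ such that $\mathcal{S}(\sigma)(i)>\mathcal{S}(\sigma)(j)$ for all $j<i$), with $\operatorname{slmax}(\epsilon)=0$. *)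

theory Defs
  imports Main
begin

function stack_sort :: "int list \<Rightarrow> int list" where
  "stack_sort A =
     (if A = [] then []
      else (let m = Max (set A);
                AL = takeWhile (\<lambda>x. x \<noteq> m) A;
                AR = tl (dropWhile (\<lambda>x. x \<noteq> m) A)
            in stack_sort AL @ stack_sort AR @ [m]))"
  by pat_completeness auto
termination
proof (relation "measure length")
  show "wf (measure length)" by simp
next
  fix A :: "int list" and m AL
  assume "A \<noteq> []" "m = Max (set A)" "AL = takeWhile (\<lambda>x. x \<noteq> m) A"
  then show "(AL, A) \<in> measure length"
  proof -
    have "m \<in> set A" using \<open>A \<noteq> []\<close> \<open>m = Max (set A)\<close> by simp
    then have "length (takeWhile (\<lambda>x. x \<noteq> m) A) < length A"
      by (induction A) auto
    then show ?thesis using \<open>AL = _\<close> by simp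
  qed
next
  fix A :: "int list" and m AL AR
  assume "A \<noteq> []" "m = Max (set A)" "AR = tl (dropWhile (\<lambda>x. x \<noteq> m) A)"
  then show "(AR, A) \<in> measure length"
  proof -
    have "length (dropWhile (\<lambda>x. x \<noteq> m) A) \<le> length A"
      by (rule length_dropWhile_le)
    moreover have "m \<in> set A" using \<open>A \<noteq> []\<close> \<open>m = Max (set A)\<close> by simp
    then have "dropWhile (\<lambda>x. x \<noteq> m) A \<noteq> []" by (induction A) auto
    ultimately show ?thesis using \<open>AR = _\<close> by (cases "dropWhile (\<lambda>x. x \<noteq> m) A") auto
  qed
qed

declare stack_sort.simps [simp del]

definition perm_seq :: "nat \<Rightarrow> int list \<Rightarrow> bool" where
  "perm_seq n \<sigma> \<longleftrightarrow> distinct \<sigma> \<and> set \<sigma> = {1..int n}"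

definition two_stack_sortable :: "nat \<Rightarrow> int list set" where
  "two_stack_sortable n = {\<sigma>. perm_seq n \<sigma> \<and> stack_sort (stack_sort \<sigma>) = [1..int n]}"

definition shift :: "int \<Rightarrow> int list \<Rightarrow> int list" where
  "shift k \<tau> = map (\<lambda>x. x + k) \<tau>"

definition lr_maxima :: "int list \<Rightarrow> nat" where
  "lr_maxima s = card {i. i < length s \<and> (\<forall>j<i. s ! j < s ! i)}"

definition slmax :: "int list \<Rightarrow> nat" where
  "slmax \<sigma> = lr_maxima (stack_sort \<sigma>)"

end

theory Submission
  imports Defs
begin

lemma ss_nonempty:
  assumes "A \<noteq> []"
  shows "stack_sort A = (let m = Max (set A) in
     stack_sort (takeWhile (\<lambda>x. x \<noteq> m) A) @ stack_sort (tl (dropWhile (\<lambda>x. x \<noteq> m) A)) @ [m])"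
  using assms by (subst stack_sort.simps) (simp add: Let_def)

lemma ss_nil[simp]: "stack_sort [] = []"
  by (subst stack_sort.simps) simp

lemma ss_split:
  assumes "\<forall>x\<in>set A. x < m" "\<forall>x\<in>set B. x < m"
  shows "stack_sort (A @ [m] @ B) = stack_sort A @ stack_sort B @ [m]"
proof -
  have M: "Max (set (A @ [m] @ B)) = m"
    using assms by (intro Max_eqI) auto
  have T: "takeWhile (\<lambda>x. x \<noteq> m) (A @ [m] @ B) = A"
    using assms by (subst takeWhile_append2) auto
  have D: "dropWhile (\<lambda>x. x \<noteq> m) (A @ [m] @ B) = m # B"
    using assms by (subst dropWhile_append2) auto
  have E: "stack_sort (A @ [m] @ B) = stack_sort (takeWhile (\<lambda>x. x \<noteq> m) (A @ [m] @ B)) @ stack_sort (tl (dropWhile (\<lambda>x. x \<noteq> m) (A @ [m] @ B))) @ [m]"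
    using ss_nonempty[of "A @ [m] @ B", unfolded Let_def M] by simp
  show ?thesis unfolding E T D by simp
qed

lemma ss_set: "set (stack_sort A) = set A"
proof (induction A rule: stack_sort.induct)
  case (1 A)
  show ?case
  proof (cases "A = []")
    case True then show ?thesis by simp
  next
    case False
    define m where "m = Max (set A)"
    have mA: "m \<in> set A" using False m_def by simp
    have dw: "dropWhile (\<lambda>x. x \<noteq> m) A = m # tl (dropWhile (\<lambda>x. x \<noteq> m) A)"
      using mA by (induction A) auto
    have "set A = set (takeWhile (\<lambda>x. x \<noteq> m) A) \<union> {m} \<union> set (tl (dropWhile (\<lambda>x. x \<noteq> m) A))"
    proof -
      have "set A = set (takeWhile (\<lambda>x. x \<noteq> m) A) \<union> set (dropWhile (\<lambda>x. x \<noteq> m) A)"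
        using set_append[of "takeWhile (\<lambda>x. x \<noteq> m) A" "dropWhile (\<lambda>x. x \<noteq> m) A"] by simp
      also have "set (dropWhile (\<lambda>x. x \<noteq> m) A) = {m} \<union> set (tl (dropWhile (\<lambda>x. x \<noteq> m) A))"
      proof -
        obtain ys where "dropWhile (\<lambda>x. x \<noteq> m) A = m # ys" using dw by blast
        then show ?thesis by simp
      qed
      finally show ?thesis by blast
    qed
    moreover have E: "stack_sort A = stack_sort (takeWhile (\<lambda>x. x \<noteq> m) A) @ stack_sort (tl (dropWhile (\<lambda>x. x \<noteq> m) A)) @ [m]"
      using ss_nonempty[OF False, unfolded Let_def m_def[symmetric]] .
    moreover have "set (stack_sort (takeWhile (\<lambda>x. x \<noteq> m) A)) = set (takeWhile (\<lambda>x. x \<noteq> m) A)"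
      by (rule 1(1)[OF False m_def refl refl])
    moreover have "set (stack_sort (tl (dropWhile (\<lambda>x. x \<noteq> m) A))) = set (tl (dropWhile (\<lambda>x. x \<noteq> m) A))"
      by (rule 1(2)[OF False m_def refl refl])
    ultimately show ?thesis by (simp only: set_append set_simps) blast
  qed
qed

lemma ss_shift: "stack_sort (map (\<lambda>x. x + c) A) = map (\<lambda>x. x + c) (stack_sort A)"
proof (induction A rule: stack_sort.induct)
  case (1 A)
  show ?case
  proof (cases "A = []")
    case True then show ?thesis by simp
  next
    case False
    define m where "m = Max (set A)"
    have M: "Max (set (map (\<lambda>x. x + c) A)) = m + c"
      unfolding m_def using False
      by (simp add: mono_Max_commute[symmetric] mono_def)
    have T: "takeWhile (\<lambda>x. x \<noteq> m + c) (map (\<lambda>x. x + c) A) = map (\<lambda>x. x + c) (takeWhile (\<lambda>x. x \<noteq> m) A)"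
      by (simp add: takeWhile_map o_def)
    have D: "tl (dropWhile (\<lambda>x. x \<noteq> m + c) (map (\<lambda>x. x + c) A)) = map (\<lambda>x. x + c) (tl (dropWhile (\<lambda>x. x \<noteq> m) A))"
      by (simp add: dropWhile_map o_def map_tl)
    have E: "stack_sort A = stack_sort (takeWhile (\<lambda>x. x \<noteq> m) A) @ stack_sort (tl (dropWhile (\<lambda>x. x \<noteq> m) A)) @ [m]"
      using ss_nonempty[OF False, unfolded Let_def m_def[symmetric]] .
    have E2: "stack_sort (map (\<lambda>x. x + c) A) = stack_sort (takeWhile (\<lambda>x. x \<noteq> m + c) (map (\<lambda>x. x + c) A)) @ stack_sort (tl (dropWhile (\<lambda>x. x \<noteq> m + c) (map (\<lambda>x. x + c) A))) @ [m + c]"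
      using ss_nonempty[of "map (\<lambda>x. x + c) A", unfolded Let_def M] False by simp
    show ?thesis
      unfolding E2 T D using 1(1)[OF False m_def refl refl] 1(2)[OF False m_def refl refl]
      by (subst E) simp
  qed
qed

lemma ss_append:
  assumes "\<forall>a\<in>set A. \<forall>b\<in>set B. a < b"
  shows "stack_sort (A @ B) = stack_sort A @ stack_sort B"
  using assms
proof (induction B arbitrary: A rule: stack_sort.induct)
  case (1 B)
  show ?case
  proof (cases "B = []")
    case True then show ?thesis by simp
  next
    case False
    define m where "m = Max (set B)"
    have mB: "m \<in> set B" using False m_def by simp
    have mge: "\<forall>x\<in>set B. x \<le> m" using m_def by simp
    have M: "Max (set (A @ B)) = m"
      using "1.prems" mB mge by (intro Max_eqI) force+
    have nA: "\<forall>x\<in>set A. x \<noteq> m" using "1.prems" mB by force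
    have T: "takeWhile (\<lambda>x. x \<noteq> m) (A @ B) = A @ takeWhile (\<lambda>x. x \<noteq> m) B"
      using nA by (simp add: takeWhile_append2)
    have D: "dropWhile (\<lambda>x. x \<noteq> m) (A @ B) = dropWhile (\<lambda>x. x \<noteq> m) B"
      using nA by (simp add: dropWhile_append2)
    have sub: "set (takeWhile (\<lambda>x. x \<noteq> m) B) \<subseteq> set B" by (auto dest: set_takeWhileD) 
    have IH: "stack_sort (A @ takeWhile (\<lambda>x. x \<noteq> m) B) = stack_sort A @ stack_sort (takeWhile (\<lambda>x. x \<noteq> m) B)"
      using 1(1)[OF False m_def refl refl] "1.prems" sub by blast
    have E: "stack_sort B = stack_sort (takeWhile (\<lambda>x. x \<noteq> m) B) @ stack_sort (tl (dropWhile (\<lambda>x. x \<noteq> m) B)) @ [m]"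
      using ss_nonempty[OF False, unfolded Let_def m_def[symmetric]] .
    have E2: "stack_sort (A @ B) = stack_sort (takeWhile (\<lambda>x. x \<noteq> m) (A @ B)) @ stack_sort (tl (dropWhile (\<lambda>x. x \<noteq> m) (A @ B))) @ [m]"
      using ss_nonempty[of "A @ B", unfolded Let_def M] False by simp
    show ?thesis
      unfolding E2 T D IH by (subst E) simp
  qed
qed

lemma lr_append:
  assumes "\<forall>a\<in>set A. \<forall>b\<in>set B. a < b"
  shows "lr_maxima (A @ B) = lr_maxima A + lr_maxima B"
proof -
  let ?SA = "{i. i < length A \<and> (\<forall>j<i. A ! j < A ! i)}"
  let ?SB = "{i. i < length B \<and> (\<forall>j<i. B ! j < B ! i)}"
  let ?S = "{i. i < length (A @ B) \<and> (\<forall>j<i. (A @ B) ! j < (A @ B) ! i)}"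
  have "?S = ?SA \<union> (\<lambda>i. i + length A) ` ?SB"
  proof (rule set_eqI, rule iffI)
    fix i assume i: "i \<in> ?S"
    show "i \<in> ?SA \<union> (\<lambda>i. i + length A) ` ?SB"
    proof (cases "i < length A")
      case True then show ?thesis using i by (auto simp: nth_append)
    next
      case False
      then obtain i' where ii: "i = i' + length A" by (metis add.commute le_Suc_ex not_le less_imp_le)
      have "i' \<in> ?SB"
      proof -
        have "i' < length B" using i ii by simp
        moreover have "\<forall>j<i'. B ! j < B ! i'"
        proof (intro allI impI)
          fix j assume "j < i'"
          then have "(A @ B) ! (j + length A) < (A @ B) ! i" using i ii by auto
          then show "B ! j < B ! i'" using ii by (simp add: nth_append)
        qed
        ultimately show ?thesis by simp
      qed
      then show ?thesis using ii by blast
    qed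
  next
    fix i assume i: "i \<in> ?SA \<union> (\<lambda>i. i + length A) ` ?SB"
    show "i \<in> ?S"
    proof (cases "i < length A")
      case True then show ?thesis using i by (auto simp: nth_append)
    next
      case False
      then obtain i' where ii: "i = i' + length A" and i': "i' \<in> ?SB" using i by auto
      have "\<forall>j<i. (A @ B) ! j < (A @ B) ! i"
      proof (intro allI impI)
        fix j assume j: "j < i"
        show "(A @ B) ! j < (A @ B) ! i"
        proof (cases "j < length A")
          case True
          then show ?thesis using assms i' ii by (simp add: nth_append)
        next
          case False
          then obtain j' where "j = j' + length A" by (metis add.commute le_Suc_ex not_le less_imp_le)
          then show ?thesis using i' ii j by (simp add: nth_append)
        qed
      qed
      then show ?thesis using i' ii by simp
    qed
  qed
  moreover have "?SA \<inter> (\<lambda>i. i + length A) ` ?SB = {}" by auto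
  moreover have "card ((\<lambda>i. i + length A) ` ?SB) = card ?SB"
    by (rule card_image) (simp add: inj_on_def)
  ultimately show ?thesis unfolding lr_maxima_def
    by (simp add: card_Un_disjoint)
qed

lemma lr_shift: "lr_maxima (map (\<lambda>x. x + c) A) = lr_maxima A"
  unfolding lr_maxima_def by (rule arg_cong[where f=card]) auto

lemma lr_single: "lr_maxima [m] = 1"
proof -
  have "{i. i < length [m] \<and> (\<forall>j<i. [m] ! j < [m] ! i)} = {0}" by auto
  then show ?thesis unfolding lr_maxima_def by simp
qed

lemma map_upto: "map (\<lambda>x. x + c) [a..b] = [a + c..b + c]"
proof (induction a b rule: upto.induct)
  case (1 i j)
  show ?case
  proof (cases "i \<le> j")
    case True
    have "map (\<lambda>x. x + c) [i..j] = map (\<lambda>x. x + c) (i # [i+1..j])" using upto_rec1[OF True] by simp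
    also have "\<dots> = (i + c) # [i + 1 + c..j + c]" using 1 True by simp
    also have "\<dots> = [i+c..j+c]" using upto_rec1[of "i+c" "j+c"] True by (simp add: ac_simps)
    finally show ?thesis .
  next
    case False then show ?thesis by simp
  qed
qed

theorem proposition5:
  fixes k l :: nat and \<pi>1 \<pi>2 :: "int list"
  assumes "\<pi>1 \<in> two_stack_sortable k" and "\<pi>2 \<in> two_stack_sortable l"
  defines "\<pi> \<equiv> \<pi>1 @ [int (k + l + 1)] @ shift (int k) \<pi>2"
  shows "\<pi> \<in> two_stack_sortable (k + l + 1)
         \<and> slmax \<pi> = slmax \<pi>1 + slmax \<pi>2 + 1"
proof -
  let ?m = "int (k + l + 1)"
  let ?p2 = "shift (int k) \<pi>2"
  have d1: "distinct \<pi>1" and s1: "set \<pi>1 = {1..int k}" and ss1: "stack_sort (stack_sort \<pi>1) = [1..int k]"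
    using assms(1) by (auto simp: two_stack_sortable_def perm_seq_def)
  have d2: "distinct \<pi>2" and s2: "set \<pi>2 = {1..int l}" and ss2: "stack_sort (stack_sort \<pi>2) = [1..int l]"
    using assms(2) by (auto simp: two_stack_sortable_def perm_seq_def)
  have sp2: "set ?p2 = {int k + 1..int k + int l}"
    unfolding shift_def using s2 by (auto simp: image_iff intro!: bexI[where x="_ - int k"])
  have dp2: "distinct ?p2" unfolding shift_def using d2 by (simp add: distinct_map inj_on_def)
  have A1: "\<forall>x\<in>set \<pi>1. x < ?m" using s1 by auto
  have A2: "\<forall>x\<in>set ?p2. x < ?m" using sp2 by auto
  have A12: "\<forall>a\<in>set \<pi>1. \<forall>b\<in>set ?p2. a < b" using s1 sp2 by auto
  have S: "stack_sort \<pi> = stack_sort \<pi>1 @ stack_sort ?p2 @ [?m]"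
    unfolding \<pi>_def by (rule ss_split[OF A1 A2])
  have Sp2: "stack_sort ?p2 = shift (int k) (stack_sort \<pi>2)"
    unfolding shift_def by (rule ss_shift)
  have B1: "\<forall>x\<in>set (stack_sort \<pi>1 @ stack_sort ?p2). x < ?m" using A1 A2 by (auto simp: ss_set)
  have B12: "\<forall>a\<in>set (stack_sort \<pi>1). \<forall>b\<in>set (stack_sort ?p2). a < b" using A12 by (simp add: ss_set)
  have "stack_sort (stack_sort \<pi>) = stack_sort (stack_sort \<pi>1 @ stack_sort ?p2) @ [?m]"
    using ss_split[OF B1, of "[]"] S by simp
  also have "\<dots> = [1..int k] @ [int k + 1..int k + int l] @ [?m]"
    using ss_append[OF B12] ss1 ss2 Sp2 ss_shift[of "int k" "stack_sort \<pi>2"]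
    by (simp add: shift_def map_upto add.commute)
  also have "\<dots> = [1..?m]"
  proof -
    have "[1..int k + int l] = [1..int k] @ [int k + 1..int k + int l]"
      using upto_split2[of 1 "int k" "int k + int l"] by (cases "k = 0") simp_all
    moreover have "[1..?m] = [1..int k + int l] @ [?m]"
      using upto_rec2[of 1 ?m] by simp
    ultimately show ?thesis by simp
  qed
  finally have part1: "stack_sort (stack_sort \<pi>) = [1..int (k + l + 1)]" .
  have dp: "distinct \<pi>" unfolding \<pi>_def using d1 dp2 A1 A2 A12 by fastforce
  have sp: "set \<pi> = {1..int (k+l+1)}" unfolding \<pi>_def using s1 sp2 by auto
  have part2: "slmax \<pi> = slmax \<pi>1 + slmax \<pi>2 + 1"
  proof -
    have C: "\<forall>a\<in>set (stack_sort \<pi>1 @ stack_sort ?p2). \<forall>b\<in>set [?m]. a < b" using B1 by simp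
    have "slmax \<pi> = lr_maxima (stack_sort \<pi>1 @ stack_sort ?p2) + 1"
      unfolding slmax_def S using lr_append[OF C] by (simp add: lr_single)
    also have "\<dots> = slmax \<pi>1 + slmax \<pi>2 + 1"
      using lr_append[OF B12] by (simp add: slmax_def Sp2[unfolded shift_def] shift_def lr_shift)
    finally show ?thesis .
  qed
  show ?thesis using part1 part2 dp sp by (simp add: two_stack_sortable_def perm_seq_def)
qed

end
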